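(* Let $n\ge 6$ be an integer and $k$ an integer with $(n+1)/2\le k\le n-3$. If $\gcd(n,k)=\gcd(n,k+1)=1$, then $\mathsf{BO}(k,\mathbb{Z}/n\mathbb{Z})=k+1$.
   Context: For a positive integer $k$, a set $\{g_1,\dots,g_k\}$ of $k$ distinct elements of a finite abelian group $G$ (written additively) is called $k$-barycentric if $\sum_{i=1}^k g_i = k\,g_j$ for some $1\le j\le k$. The $k$-th barycentric Olson constant $\mathsf{BO}(k,G)$ is the smallest integer $\ell$ such that every subset $A\subseteq G$ with $|A|\ge \ell$ contains a $k$-barycentric subset (so that always $\mathsf{BO}(k,G)\le |G|+1$). *)

theory Defs
  imports Main
begin

text \<open>The cyclic group Z/nZ is modelled by the carrier {0..<n} of integers with
addition modulo n.\<close>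

definition zn :: "nat \<Rightarrow> int set" where
  "zn n = {0..<int n}"

definition barycentric_zn :: "nat \<Rightarrow> nat \<Rightarrow> int set \<Rightarrow> bool" where
  "barycentric_zn n k S \<longleftrightarrow> S \<subseteq> zn n \<and> card S = k \<and>
     (\<exists>g\<in>S. \<Sum>S mod int n = (int k * g) mod int n)"

definition BO_zn :: "nat \<Rightarrow> nat \<Rightarrow> nat" where
  "BO_zn k n = (LEAST l. \<forall>A. A \<subseteq> zn n \<longrightarrow> card A \<ge> l \<longrightarrow>
                   (\<exists>S\<subseteq>A. barycentric_zn n k S))"

end

theory Submission
  imports Defs
begin

lemma zn_cancel:
  fixes n :: nat and c a b :: int
  assumes cop: "coprime (int n) c" and a: "a \<in> zn n" and b: "b \<in> zn n"
    and d: "int n dvd c * (a - b)"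
  shows "a = b"
proof (rule ccontr)
  assume ne: "a \<noteq> b"
  have "int n dvd a - b" using d cop coprime_dvd_mult_right_iff by blast
  then have "\<bar>int n\<bar> \<le> \<bar>a - b\<bar>" using ne by (intro dvd_imp_le_int) auto
  moreover have "\<bar>a - b\<bar> < int n" using a b by (auto simp: zn_def)
  ultimately show False by simp
qed

lemma small_dvd_zero:
  fixes n :: nat and t :: int
  assumes "int n dvd t" "\<bar>t\<bar> < int n"
  shows "t = 0"
  using dvd_imp_le_int[of t "int n"] assms by force

lemma gauss_int: "2 * \<Sum>{0..int N} = int N * (int N + 1)"
proof (induction N)
  case 0 then show ?case by simp
next
  case (Suc N)
  have "{0..int (Suc N)} = insert (int N + 1) {0..int N}" by auto
  then have "\<Sum>{0..int (Suc N)} = (int N + 1) + \<Sum>{0..int N}" by simp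
  then show ?case using Suc by (simp add: algebra_simps)
qed

lemma two:  "2 \<le> card D \<Longrightarrow> \<exists>a b. a \<in> D \<and> b \<in> D \<and> a \<noteq> b"
proof -
  assume c: "2 \<le> card D"
  then have "D \<noteq> {}" by auto
  then obtain a where a: "a \<in> D" by blast
  have "finite D" using c card.infinite by fastforce
  then have "card (D - {a}) \<ge> 1" using c a by simp
  then have "D - {a} \<noteq> {}" by (metis card.empty not_one_le_zero)
  then obtain b where "b \<in> D - {a}" by blast
  with a show ?thesis by blast
qed

lemma part1:
  fixes n k :: nat
  assumes "n \<le> 2 * k" and copk: "coprime (int n) (int k)"
    and copk1: "coprime (int n) (int k + 1)"
    and A: "A \<subseteq> zn n" and cA: "k + 1 \<le> card A"
  shows "\<exists>S\<subseteq>A. barycentric_zn n k S"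
proof -
  have fzn: "finite (zn n)" by (simp add: zn_def)
  have cardzn: "card (zn n) = n" by (simp add: zn_def)
  obtain B where B: "B \<subseteq> A" "card B = k + 1" "finite B"
    using obtain_subset_with_card_n[OF cA] by blast
  have Bz: "B \<subseteq> zn n" using B A by auto
  define s where "s = \<Sum>B"
  define \<psi> where "\<psi> g = (s - int k * g) mod int n" for g
  have npos: "n > 0" using cA A fzn cardzn card_mono[OF fzn A] by linarith
  have psiz: "\<psi> g \<in> zn n" for g using npos by (simp add: \<psi>_def zn_def)
  have psiinj: "g1 = g2" if "g1 \<in> zn n" "g2 \<in> zn n" "\<psi> g1 = \<psi> g2" for g1 g2
  proof (rule zn_cancel[OF copk that(1) that(2)])
    have "int n dvd (s - int k * g1) - (s - int k * g2)"
      using that(3) by (simp only: \<psi>_def mod_eq_dvd_iff)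
    then have "int n dvd int k * g2 - int k * g1" by simp
    then have "int n dvd int k * g1 - int k * g2" using dvd_diff_commute by blast
    then show "int n dvd int k * (g1 - g2)" by (simp add: algebra_simps)
  qed
  define D where "D = {g \<in> B. \<psi> g \<in> B}"
  have "\<psi> ` (B - D) \<subseteq> zn n - B" using psiz by (auto simp: D_def)
  moreover have "inj_on \<psi> (B - D)" using psiinj Bz by (auto simp: inj_on_def)
  ultimately have "card (B - D) \<le> card (zn n - B)"
    using card_inj_on_le fzn by (metis finite_Diff)
  also have "card (zn n - B) = n - (k + 1)"
    using card_Diff_subset[OF B(3) Bz] cardzn B by simp
  finally have cBD: "card (B - D) \<le> n - (k + 1)" .
  have DB: "D \<subseteq> B" by (auto simp: D_def)
  have "card (B - D) = card B - card D" using card_Diff_subset[of D B] DB B(3)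
    by (meson finite_subset)
  moreover have "k + 1 \<le> n" using card_mono[OF fzn Bz] B cardzn by simp
  ultimately have cD: "card D \<ge> 2" using cBD B assms(1) card_mono[OF B(3) DB] by arith
  then obtain g1 g2 where g: "g1 \<in> D" "g2 \<in> D" "g1 \<noteq> g2"
    using two[OF cD] by blast
  have "\<exists>g\<in>D. \<psi> g \<noteq> g"
  proof (rule ccontr)
    assume "\<not> ?thesis"
    then have e: "\<psi> g1 = g1" "\<psi> g2 = g2" using g by auto
    have "g1 = g2"
    proof (rule zn_cancel[OF copk1])
      show "g1 \<in> zn n" "g2 \<in> zn n" using g DB Bz by auto
      have "int n dvd (s - int k * g1) - g1" using e(1)[unfolded \<psi>_def]
        by (metis mod_eq_dvd_iff mod_mod_trivial)
      moreover have "int n dvd (s - int k * g2) - g2" using e(2)[unfolded \<psi>_def]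
        by (metis mod_eq_dvd_iff mod_mod_trivial)
      ultimately have "int n dvd ((s - int k * g2) - g2) - ((s - int k * g1) - g1)"
        by (rule dvd_diff[rotated])
      then show "int n dvd (int k + 1) * (g1 - g2)" by (simp add: algebra_simps)
    qed
    with g show False by simp
  qed
  then obtain g where gD: "g \<in> D" and gne: "\<psi> g \<noteq> g" by blast
  define b where "b = \<psi> g"
  have bB: "b \<in> B" and gB: "g \<in> B" using gD by (auto simp: D_def b_def)
  define S where "S = B - {b}"
  have "S \<subseteq> A" using B by (auto simp: S_def)
  moreover have "barycentric_zn n k S"
    unfolding barycentric_zn_def
  proof (intro conjI)
    show "S \<subseteq> zn n" using Bz by (auto simp: S_def)
    show "card S = k" using B bB by (simp add: S_def)
    have gS: "g \<in> S" using gB gne by (auto simp: S_def b_def)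
    have "\<Sum>S = s - b" using B(3) bB by (simp add: S_def s_def sum_diff1)
    then have "\<Sum>S mod int n = (s - (s - int k * g) mod int n) mod int n"
      by (simp only: b_def \<psi>_def)
    also have "\<dots> = (s - (s - int k * g)) mod int n" by (rule mod_diff_right_eq)
    also have "\<dots> = (int k * g) mod int n" by simp
    finally have "\<Sum>S mod int n = (int k * g) mod int n" .
    with gS show "\<exists>g\<in>S. \<Sum>S mod int n = (int k * g) mod int n" by blast
  qed
  ultimately show ?thesis by blast
qed

lemma part2:
  fixes n k :: nat
  assumes "n + 1 \<le> 2 * k" and "k + 3 \<le> n" and copk: "coprime (int n) (int k)"
    and odd: "odd n"
  shows "\<exists>A. A \<subseteq> zn n \<and> card A = k \<and> \<not> (\<exists>S\<subseteq>A. barycentric_zn n k S)"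
proof -
  define j :: int where "j = (if even k then 0 else (int n - int k) div 2)"
  have j2: "2 * j = (if even k then 0 else int n - int k)"
    using odd by (auto simp: j_def)
  have jr: "0 \<le> j" "j \<le> int k" using j2 assms(1,2) by (auto split: if_splits)
  define A where "A = {0..int k} - {j}"
  have Az: "A \<subseteq> zn n" using assms(2) by (auto simp: A_def zn_def)
  have cA: "card A = k" using jr by (simp add: A_def)
  have sA: "2 * \<Sum>A = int k * (int k + 1) - 2 * j"
    using gauss_int[of k] jr by (simp add: A_def sum_diff1 algebra_simps)
  have nb: "\<not> barycentric_zn n k A"
  proof
    assume "barycentric_zn n k A"
    then obtain g where gA: "g \<in> A" and e: "\<Sum>A mod int n = (int k * g) mod int n"
      by (auto simp: barycentric_zn_def)
    have g: "0 \<le> g" "g \<le> int k" using gA by (auto simp: A_def)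
    have "int n dvd \<Sum>A - int k * g" using e by (simp add: mod_eq_dvd_iff)
    then have d: "int n dvd 2 * \<Sum>A - 2 * (int k * g)"
      by (metis dvd_mult right_diff_distrib mult.commute)
    show False
    proof (cases "even k")
      case True
      then have "2 * \<Sum>A - 2 * (int k * g) = int k * (int k + 1 - 2 * g)"
        using sA j2 by (simp add: algebra_simps)
      with d have "int n dvd int k * (int k + 1 - 2 * g)" by simp
      then have "int n dvd int k + 1 - 2 * g" using copk coprime_dvd_mult_right_iff by blast
      moreover have "\<bar>int k + 1 - 2 * g\<bar> < int n" using g assms by auto
      ultimately have "int k + 1 - 2 * g = 0" by (rule small_dvd_zero)
      then show False using True by presburger
    next
      case False
      then have "2 * \<Sum>A - 2 * (int k * g) = int k * (int k + 2 - 2 * g) - int n"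
        using sA j2 by (simp add: algebra_simps)
      with d have "int n dvd int k * (int k + 2 - 2 * g)"
        by (metis dvd_add_left_iff dvd_refl diff_add_cancel)
      then have "int n dvd int k + 2 - 2 * g" using copk coprime_dvd_mult_right_iff by blast
      moreover have "\<bar>int k + 2 - 2 * g\<bar> < int n" using g assms by auto
      ultimately have "int k + 2 - 2 * g = 0" by (rule small_dvd_zero)
      then have "even (int k)" by presburger
      then show False using False by simp
    qed
  qed
  have "\<not> (\<exists>S\<subseteq>A. barycentric_zn n k S)"
  proof
    assume "\<exists>S\<subseteq>A. barycentric_zn n k S"
    then obtain S where S: "S \<subseteq> A" "barycentric_zn n k S" by blast
    have "finite A" by (simp add: A_def)
    moreover have "card S = card A" using S cA by (simp add: barycentric_zn_def)
    ultimately have "S = A" using S(1) card_subset_eq by blast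
    with S nb show False by simp
  qed
  with Az cA show ?thesis by blast
qed

theorem mainTheorem5:
  fixes n k :: nat
  assumes "n \<ge> 6" and "n + 1 \<le> 2 * k" and "k + 3 \<le> n"
    and "gcd n k = 1" and "gcd n (k + 1) = 1"
  shows "BO_zn k n = k + 1"
proof -
  have copk: "coprime (int n) (int k)" using assms(4)
    by (metis coprime_iff_gcd_eq_1 gcd_int_int_eq of_nat_1)
  have copk1: "coprime (int n) (int k + 1)" using assms(5)
    by (metis coprime_iff_gcd_eq_1 gcd_int_int_eq of_nat_1 of_nat_add)
  have odd: "odd n"
  proof
    assume e: "even n"
    show False
    proof (cases "even k")
      case True
      then have "2 dvd gcd n k" using e by simp
      with assms(4) show False by simp
    next
      case False
      then have "2 dvd gcd n (k+1)" using e by simp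
      with assms(5) show False by simp
    qed
  qed
  let ?P = "\<lambda>l. \<forall>A. A \<subseteq> zn n \<longrightarrow> card A \<ge> l \<longrightarrow> (\<exists>S\<subseteq>A. barycentric_zn n k S)"
  have P1: "?P (k + 1)" using part1[OF _ copk copk1] assms(2) by auto
  obtain A0 where A0: "A0 \<subseteq> zn n" "card A0 = k" "\<not> (\<exists>S\<subseteq>A0. barycentric_zn n k S)"
    using part2[OF assms(2,3) copk odd] by blast
  show ?thesis unfolding BO_zn_def
  proof (rule Least_equality)
    show "?P (k + 1)" by (rule P1)
    fix y assume "?P y"
    show "k + 1 \<le> y"
    proof (rule ccontr)
      assume "\<not> k + 1 \<le> y"
      then have "card A0 \<ge> y" using A0 by simp
      with \<open>?P y\<close> A0 show False by blast
    qed
  qed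
qed

end
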